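(* Let $P\in\mathbb{N}_0^{n\times n}$ be an incidence matrix and let $k\in\mathbb{N}$ with $k>1$. Then the incidence matrix $P'=kP$ does not exclusively represent irreducible morphisms.
   Context: Let $\Sigma=\{a_1,\dots,a_n\}$. A morphism $\varphi:\Sigma^+\to\Sigma^+$ (with $\varphi(uv)=\varphi(u)\varphi(v)$, non-empty images) is Parikh-positive if every letter occurs in $\varphi(a_1)\cdots\varphi(a_n)$. Its incidence matrix is $P(\varphi)=(m_{i,j})$ with $m_{i,j}=|\varphi(a_j)|_{a_i}$ (number of occurrences of $a_i$ in $\varphi(a_j)$). An incidence matrix is any square non-negative integer matrix; throughout, the incidence matrices considered have no zero rows or columns. An automorphism is an injective morphism mapping each letter to a single letter; a morphism is reducible if it equals $\psi_2\circ\psi_1$ with neither $\psi_1,\psi_2$ an automorphism, irreducible otherwise. An incidence matrix $P$ exclusively represents irreducible (resp. reducible) morphisms if every Parikh-positive morphism $\varphi$ with $P(\varphi)=P$ is irreducible (resp. reducible). *)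

theory Defs
  imports Main
begin

text \<open>Alphabet \<open>\<Sigma> = {a_1,...,a_n}\<close> is represented by the letters \<open>0,...,n-1\<close> (type nat);
  words are lists of letters. A morphism \<open>\<Sigma>\<^sup>+ \<rightarrow> \<Sigma>\<^sup>+\<close> is determined by the images of the
  letters, so it is represented by a function \<open>f :: nat \<Rightarrow> nat list\<close> (only its values on
  letters \<open>i < n\<close> matter); it extends to words by \<open>concat (map f w)\<close>.\<close>

definition is_morphism :: "nat \<Rightarrow> (nat \<Rightarrow> nat list) \<Rightarrow> bool" where
  "is_morphism n f \<longleftrightarrow> (\<forall>i<n. f i \<noteq> [] \<and> set (f i) \<subseteq> {..<n})"

definition parikh_positive :: "nat \<Rightarrow> (nat \<Rightarrow> nat list) \<Rightarrow> bool" where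
  "parikh_positive n f \<longleftrightarrow> (\<forall>i<n. i \<in> set (concat (map f [0..<n])))"

definition incidence :: "(nat \<Rightarrow> nat list) \<Rightarrow> nat \<Rightarrow> nat \<Rightarrow> nat" where
  "incidence f i j = count_list (f j) i"

definition is_automorphism :: "nat \<Rightarrow> (nat \<Rightarrow> nat list) \<Rightarrow> bool" where
  "is_automorphism n f \<longleftrightarrow> is_morphism n f \<and> (\<forall>i<n. length (f i) = 1) \<and> inj_on f {..<n}"

definition morph_comp :: "(nat \<Rightarrow> nat list) \<Rightarrow> (nat \<Rightarrow> nat list) \<Rightarrow> nat \<Rightarrow> nat list" where
  "morph_comp g f = (\<lambda>i. concat (map g (f i)))"

definition reducible :: "nat \<Rightarrow> (nat \<Rightarrow> nat list) \<Rightarrow> bool" where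
  "reducible n \<phi> \<longleftrightarrow> (\<exists>\<psi>1 \<psi>2. is_morphism n \<psi>1 \<and> is_morphism n \<psi>2 \<and>
      \<not> is_automorphism n \<psi>1 \<and> \<not> is_automorphism n \<psi>2 \<and>
      (\<forall>i<n. \<phi> i = morph_comp \<psi>2 \<psi>1 i))"

definition irreducible_morph :: "nat \<Rightarrow> (nat \<Rightarrow> nat list) \<Rightarrow> bool" where
  "irreducible_morph n \<phi> \<longleftrightarrow> \<not> reducible n \<phi>"

text \<open>An \<open>n \<times> n\<close> matrix is \<open>P :: nat \<Rightarrow> nat \<Rightarrow> nat\<close>, entries \<open>P i j\<close> for \<open>i, j < n\<close>.\<close>
definition excl_irreducible :: "nat \<Rightarrow> (nat \<Rightarrow> nat \<Rightarrow> nat) \<Rightarrow> bool" where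
  "excl_irreducible n P \<longleftrightarrow> (\<forall>\<phi>. is_morphism n \<phi> \<and> parikh_positive n \<phi> \<and>
      (\<forall>i<n. \<forall>j<n. incidence \<phi> i j = P i j) \<longrightarrow> irreducible_morph n \<phi>)"

end

theory Submission
  imports Defs
begin

lemma cnt_replicate: "count_list (replicate m x) y = (if x = y then m else 0)"
  by (induction m) auto

lemma cnt_rep: "count_list (concat (map (\<lambda>x. replicate k x) xs)) i = k * count_list xs i"
  by (induction xs) (auto simp: count_list_append cnt_replicate)

lemma cnt_gam: "count_list (concat (map (\<lambda>i. replicate (P i j) i) [0..<m])) x = (if x < m then P x j else 0)"
  by (induction m) (auto simp: count_list_append cnt_replicate)

lemma set_gam: "set (concat (map (\<lambda>i. replicate (P i j) i) [0..<m])) = {i. i < m \<and> P i j \<noteq> 0}"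
  by auto

theorem proposition17:
  fixes n k :: nat and P :: "nat \<Rightarrow> nat \<Rightarrow> nat"
  assumes "n \<ge> 2"
    and "\<forall>i<n. \<exists>j<n. P i j \<noteq> 0"
    and "\<forall>j<n. \<exists>i<n. P i j \<noteq> 0"
    and "k > 1"
  shows "\<not> excl_irreducible n (\<lambda>i j. k * P i j)"
proof -
  define \<gamma> where "\<gamma> = (\<lambda>j. concat (map (\<lambda>i. replicate (P i j) i) [0..<n]))"
  define \<beta> where "\<beta> = (\<lambda>i::nat. if i = 0 then replicate k i else [i])"
  define \<alpha> where "\<alpha> = (\<lambda>i::nat. if i = 0 then [i] else replicate k i)"
  define \<psi>1 where "\<psi>1 = morph_comp \<beta> \<gamma>"
  define \<phi> where "\<phi> = morph_comp \<alpha> \<psi>1"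
  have ab: "concat (map \<alpha> (concat (map \<beta> xs))) = concat (map (\<lambda>x. replicate k x) xs)" for xs
    by (induction xs) (auto simp: \<alpha>_def \<beta>_def)
  have phi: "\<phi> j = concat (map (\<lambda>x. replicate k x) (\<gamma> j))" for j
    by (simp add: \<phi>_def \<psi>1_def morph_comp_def ab)
  have setg: "set (\<gamma> j) = {i. i < n \<and> P i j \<noteq> 0}" for j
    unfolding \<gamma>_def by (rule set_gam)
  have k0: "k \<noteq> 0" using assms(4) by simp
  have setphi: "set (\<phi> j) = {i. i < n \<and> P i j \<noteq> 0}" for j
    using k0 by (auto simp: phi setg)
  have mg: "is_morphism n \<gamma>"
    unfolding is_morphism_def using assms(3) by (auto simp flip: set_empty simp: setg)
  have mphi: "is_morphism n \<phi>"
    unfolding is_morphism_def using assms(3) by (auto simp flip: set_empty simp: setphi)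
  have pp: "parikh_positive n \<phi>"
    unfolding parikh_positive_def using assms(2) by (fastforce simp: setphi)
  have inc: "\<forall>i<n. \<forall>j<n. incidence \<phi> i j = k * P i j"
    by (auto simp: incidence_def phi cnt_rep \<gamma>_def cnt_gam)
  have ma: "is_morphism n \<alpha>" using k0 by (auto simp: is_morphism_def \<alpha>_def)
  have na: "\<not> is_automorphism n \<alpha>"
  proof
    assume "is_automorphism n \<alpha>"
    then have "length (\<alpha> 1) = 1" using assms(1) by (auto simp: is_automorphism_def)
    then show False using assms(4) by (simp add: \<alpha>_def)
  qed
  have s1: "set (\<psi>1 j) = set (\<gamma> j)" for j
    using k0 by (auto simp: \<psi>1_def morph_comp_def \<beta>_def split: if_splits)
  have m1: "is_morphism n \<psi>1"
    using mg unfolding is_morphism_def by (auto simp flip: set_empty simp: s1)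
  have n1: "\<not> is_automorphism n \<psi>1"
  proof
    assume A: "is_automorphism n \<psi>1"
    obtain j where j: "j < n" "P 0 j \<noteq> 0" using assms(1,2) by fastforce
    then have "0 \<in> set (\<gamma> j)" using assms(1) by (simp add: setg)
    then obtain xs ys where g: "\<gamma> j = xs @ 0 # ys" by (meson split_list)
    have "length (\<psi>1 j) \<ge> k" by (simp add: \<psi>1_def morph_comp_def g \<beta>_def)
    moreover have "length (\<psi>1 j) = 1" using A j by (auto simp: is_automorphism_def)
    ultimately show False using assms(4) by simp
  qed
  have "reducible n \<phi>"
    unfolding reducible_def using m1 ma n1 na by (auto simp: \<phi>_def)
  then show ?thesis
    unfolding excl_irreducible_def irreducible_morph_def using mphi pp inc by blast
qed

end
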